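(* Assume the standing assumptions. Let $\bar u$ be a local solution of (P) with radius $\rho>0$, let $\epsilon_k>0$ with $\epsilon_k\to0$, let $u_k$ be a global solution of $\min\{\Phi_{\epsilon_k}(u)+\frac12\|u-\bar u\|_{L^2(\Omega)}^2:\ u\in V,\ \|u-\bar u\|_V\le\rho\}$, and let $\lambda_k\in V^*$, $\langle\lambda_k,v\rangle_{V^*,V}:=\int_\Omega 2u_k\psi_{\epsilon_k}'(u_k^2)v\,dx$. Suppose $u_k\to\bar u$ in $V$ and $\lambda_k\to\bar\lambda$ in $V^*$. Then \[ \langle\lambda_k,u_k\rangle_{V^*,V}\to\langle\bar\lambda,\bar u\rangle_{V^*,V}=p\int_\Omega|\bar u|^p\,dx . \]
   Context: Standing assumptions: $\Omega\subset\mathbb R^d$ bounded Lipschitz domain; $V$ real Hilbert space with inner product $\langle\cdot,\cdot\rangle_V$, $V\subset L^2(\Omega)$ with compact and dense embedding; $V^*$ dual with pairing $\langle\cdot,\cdot\rangle_{V^*,V}$. $F:V\to\mathbb R$ weakly lower semicontinuous, bounded below by an affine function, continuously Fréchet differentiable. $\alpha>0$, $\beta>0$, $p\in(0,1)$. For $\epsilon>0$, $\psi_\epsilon(t)=\frac p2\frac{t}{\epsilon^{2-p}}+(1-\frac p2)\epsilon^p$ if $t\in[0,\epsilon^2)$ and $\psi_\epsilon(t)=t^{p/2}$ if $t\ge\epsilon^2$, with $\psi_\epsilon'(t)=\frac p2\min(\epsilon^{p-2},t^{(p-2)/2})$; $\psi_0(t)=t^{p/2}$. $G_\epsilon(u):=\int_\Omega\psi_\epsilon(|u|^2)\,dx$,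 $\Phi_\epsilon(u):=F(u)+\frac\alpha2\|u\|_V^2+\beta G_\epsilon(u)$ for $\epsilon\ge0$. (P) is $\min_{u\in V}\Phi_0(u)$; $\bar u$ is a local solution with radius $\rho$ if $\Phi_0(\bar u)\le\Phi_0(u)$ whenever $\|u-\bar u\|_V\le\rho$. *)

theory Defs
  imports "HOL-Analysis.Analysis"
begin

definition lipschitz_domain :: "'a::euclidean_space set \<Rightarrow> bool" where
  "lipschitz_domain \<Omega> \<longleftrightarrow> open \<Omega> \<and> connected \<Omega> \<and> \<Omega> \<noteq> {} \<and>
     (\<forall>x0 \<in> frontier \<Omega>. \<exists>r>0. \<exists>n::'a. \<exists>\<gamma>::'a \<Rightarrow> real. \<exists>L.
        norm n = 1 \<and> lipschitz_on L {y. y \<bullet> n = 0} \<gamma> \<and>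
        \<Omega> \<inter> ball x0 r = {x \<in> ball x0 r. x \<bullet> n > \<gamma> (x - (x \<bullet> n) *\<^sub>R n)})"

definition L2set :: "'a::euclidean_space set \<Rightarrow> ('a \<Rightarrow> real) set" where
  "L2set \<Omega> = {f. set_borel_measurable lebesgue \<Omega> f \<and> set_integrable lebesgue \<Omega> (\<lambda>x. (f x)\<^sup>2)}"

definition L2norm :: "'a::euclidean_space set \<Rightarrow> ('a \<Rightarrow> real) \<Rightarrow> real" where
  "L2norm \<Omega> f = sqrt (LINT x:\<Omega>|lebesgue. (f x)\<^sup>2)"

definition compact_dense_embedding ::
  "'a::euclidean_space set \<Rightarrow> ('v::{real_inner,complete_space} \<Rightarrow> 'a \<Rightarrow> real) \<Rightarrow> bool" where
  "compact_dense_embedding \<Omega> \<iota> \<longleftrightarrow>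
     (\<forall>v. \<iota> v \<in> L2set \<Omega>) \<and>
     (\<forall>u w. AE x in lebesgue. x \<in> \<Omega> \<longrightarrow> \<iota> (u + w) x = \<iota> u x + \<iota> w x) \<and>
     (\<forall>c u. AE x in lebesgue. x \<in> \<Omega> \<longrightarrow> \<iota> (c *\<^sub>R u) x = c * \<iota> u x) \<and>
     (\<forall>v. (AE x in lebesgue. x \<in> \<Omega> \<longrightarrow> \<iota> v x = 0) \<longrightarrow> v = 0) \<and>
     (\<exists>C. \<forall>v. L2norm \<Omega> (\<iota> v) \<le> C * norm v) \<and>
     (\<forall>vs::nat \<Rightarrow> 'v. bounded (range vs) \<longrightarrow>
        (\<exists>r f. strict_mono r \<and> f \<in> L2set \<Omega> \<and>
           (\<lambda>n. L2norm \<Omega> (\<lambda>x. \<iota> (vs (r n)) x - f x)) \<longlonglongrightarrow> 0)) \<and>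
     (\<forall>f \<in> L2set \<Omega>. \<forall>e>0. \<exists>v. L2norm \<Omega> (\<lambda>x. \<iota> v x - f x) < e)"

definition weakly_lsc :: "('v::real_inner \<Rightarrow> real) \<Rightarrow> bool" where
  "weakly_lsc F \<longleftrightarrow> (\<forall>us u. (\<forall>v. (\<lambda>n. inner (us n) v) \<longlonglongrightarrow> inner u v) \<longrightarrow>
                         ereal (F u) \<le> liminf (\<lambda>n. ereal (F (us n))))"

definition bounded_below_affine :: "('v::real_normed_vector \<Rightarrow> real) \<Rightarrow> bool" where
  "bounded_below_affine F \<longleftrightarrow> (\<exists>l::'v \<Rightarrow>\<^sub>L real. \<exists>c. \<forall>u. blinfun_apply l u + c \<le> F u)"

definition continuously_frechet_differentiable :: "('v::real_normed_vector \<Rightarrow> real) \<Rightarrow> bool" where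
  "continuously_frechet_differentiable F \<longleftrightarrow>
     (\<exists>F' :: 'v \<Rightarrow> ('v \<Rightarrow>\<^sub>L real). (\<forall>u. (F has_derivative blinfun_apply (F' u)) (at u)) \<and>
        continuous_on UNIV F')"

definition psi :: "real \<Rightarrow> real \<Rightarrow> real \<Rightarrow> real" where
  "psi p \<epsilon> t = (if \<epsilon> = 0 then t powr (p/2)
     else if t < \<epsilon>\<^sup>2 then p/2 * t / \<epsilon> powr (2 - p) + (1 - p/2) * \<epsilon> powr p
     else t powr (p/2))"

text \<open>Derivative psi'_eps(t) = p/2 min(eps^(p-2), t^((p-2)/2)) for eps > 0, t >= 0
  (written by cases to avoid the convention 0 powr a = 0).\<close>
definition psi' :: "real \<Rightarrow> real \<Rightarrow> real \<Rightarrow> real" where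
  "psi' p \<epsilon> t = (if t < \<epsilon>\<^sup>2 then p/2 * \<epsilon> powr (p - 2) else p/2 * t powr ((p - 2)/2))"

definition G :: "'a::euclidean_space set \<Rightarrow> ('v \<Rightarrow> 'a \<Rightarrow> real) \<Rightarrow> real \<Rightarrow> real \<Rightarrow> 'v \<Rightarrow> real" where
  "G \<Omega> \<iota> p \<epsilon> u = (LINT x:\<Omega>|lebesgue. psi p \<epsilon> ((\<iota> u x)\<^sup>2))"

definition Phi :: "'a::euclidean_space set \<Rightarrow> ('v::real_normed_vector \<Rightarrow> 'a \<Rightarrow> real) \<Rightarrow>
    ('v \<Rightarrow> real) \<Rightarrow> real \<Rightarrow> real \<Rightarrow> real \<Rightarrow> real \<Rightarrow> 'v \<Rightarrow> real" where
  "Phi \<Omega> \<iota> F \<alpha> \<beta> p \<epsilon> u = F u + \<alpha>/2 * (norm u)\<^sup>2 + \<beta> * G \<Omega> \<iota> p \<epsilon> u"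

end

theory Submission
  imports Defs
begin

lemma subadd_powr:
  fixes a b p :: real
  assumes "a \<ge> 0" "b \<ge> 0" "0 < p" "p \<le> 1"
  shows "(a+b) powr p \<le> a powr p + b powr p"
proof (cases "a + b = 0")
  case True then show ?thesis using assms by auto
next
  case False
  hence s: "a + b > 0" using assms by auto
  have key: "c powr p \<ge> c" if "0 \<le> c" "c \<le> 1" for c :: real
  proof (cases "c = 0")
    case True then show ?thesis by simp
  next
    case False
    hence "c powr p \<ge> c powr 1" using that assms by (intro powr_mono') auto
    thus ?thesis using that False by simp
  qed
  have "a powr p = (a+b) powr p * (a/(a+b)) powr p" using s assms
    by (simp add: powr_divide)
  also have "\<dots> \<ge> (a+b) powr p * (a/(a+b))" using s assms key[of "a/(a+b)"]
    by (intro mult_left_mono) auto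
  finally have 1: "a powr p \<ge> (a+b) powr p * (a/(a+b))" .
  have "b powr p = (a+b) powr p * (b/(a+b)) powr p" using s assms
    by (simp add: powr_divide)
  also have "\<dots> \<ge> (a+b) powr p * (b/(a+b))" using s assms key[of "b/(a+b)"]
    by (intro mult_left_mono) auto
  finally have 2: "b powr p \<ge> (a+b) powr p * (b/(a+b))" .
  have "(a+b) powr p * (a/(a+b)) + (a+b) powr p * (b/(a+b)) = (a+b) powr p * ((a+b)/(a+b))"
    by (simp only: add_divide_distrib distrib_left)
  hence "(a+b) powr p * (a/(a+b)) + (a+b) powr p * (b/(a+b)) = (a+b) powr p"
    using s by simp
  thus ?thesis using 1 2 by linarith
qed

lemma diff_abs_powr:
  fixes y z p :: real
  assumes "0 < p" "p \<le> 1"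
  shows "\<bar>\<bar>y\<bar> powr p - \<bar>z\<bar> powr p\<bar> \<le> \<bar>y - z\<bar> powr p"
proof -
  have "\<bar>y\<bar> powr p \<le> \<bar>z\<bar> powr p + \<bar>y - z\<bar> powr p"
  proof -
    have "\<bar>y\<bar> powr p \<le> (\<bar>z\<bar> + \<bar>y - z\<bar>) powr p"
      using assms by (intro powr_mono2) auto
    also have "\<dots> \<le> \<bar>z\<bar> powr p + \<bar>y - z\<bar> powr p" using assms by (intro subadd_powr) auto
    finally show ?thesis .
  qed
  moreover have "\<bar>z\<bar> powr p \<le> \<bar>y\<bar> powr p + \<bar>y - z\<bar> powr p"
  proof -
    have "\<bar>z\<bar> powr p \<le> (\<bar>y\<bar> + \<bar>y - z\<bar>) powr p"
      using assms by (intro powr_mono2) auto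
    also have "\<dots> \<le> \<bar>y\<bar> powr p + \<bar>y - z\<bar> powr p" using assms by (intro subadd_powr) auto
    finally show ?thesis .
  qed
  ultimately show ?thesis by linarith
qed

lemma powr_split_bound:
  fixes t d p :: real
  assumes "t \<ge> 0" "d > 0" "0 < p" "p < 2"
  shows "t powr p \<le> d powr p + d powr (p - 2) * t\<^sup>2"
proof (cases "t \<le> d")
  case True
  hence "t powr p \<le> d powr p" using assms by (intro powr_mono2) auto
  moreover have "d powr (p - 2) * t\<^sup>2 \<ge> 0" by simp
  ultimately show ?thesis by linarith
next
  case False
  hence tp: "t > 0" using assms by auto
  have "t powr p = t powr (p - 2) * t\<^sup>2" using tp
    by (simp add: powr_diff power2_eq_square)
  also have "\<dots> \<le> d powr (p - 2) * t\<^sup>2"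
    using False assms by (intro mult_right_mono powr_mono2') auto
  finally show ?thesis using assms powr_ge_zero[of d p] by linarith
qed

lemma psi'_bound:
  fixes y p e :: real
  assumes "e > 0" "0 < p"
  shows "\<bar>2 * y * psi' p e (y\<^sup>2) * y - p * \<bar>y\<bar> powr p\<bar> \<le> p * e powr p"
proof (cases "y\<^sup>2 < e\<^sup>2")
  case True
  hence ye: "\<bar>y\<bar> < e" using assms by (simp add: abs_less_iff power2_less_imp_less real_sqrt_less_iff)
  have lhs: "2 * y * psi' p e (y\<^sup>2) * y = p * (e powr (p - 2) * y\<^sup>2)"
    using True by (simp add: psi'_def power2_eq_square)
  have "e powr (p - 2) * y\<^sup>2 \<le> e powr (p - 2) * e\<^sup>2"
    using True by (intro mult_left_mono) auto
  also have "\<dots> = e powr p" using assms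
    by (simp add: powr_diff power2_eq_square powr_add[symmetric])
  finally have a: "e powr (p - 2) * y\<^sup>2 \<le> e powr p" .
  have b: "\<bar>y\<bar> powr p \<le> e powr p" using ye assms by (intro powr_mono2) auto
  have "0 \<le> e powr (p - 2) * y\<^sup>2" by simp
  hence c: "\<bar>e powr (p - 2) * y\<^sup>2 - \<bar>y\<bar> powr p\<bar> \<le> e powr p" using a b powr_ge_zero[of "\<bar>y\<bar>" p] by linarith
  have "\<bar>p * (e powr (p - 2) * y\<^sup>2) - p * \<bar>y\<bar> powr p\<bar> = p * \<bar>e powr (p - 2) * y\<^sup>2 - \<bar>y\<bar> powr p\<bar>"
    using assms by (simp add: abs_mult right_diff_distrib[symmetric])
  also have "\<dots> \<le> p * e powr p" using c assms by (intro mult_left_mono) auto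
  finally show ?thesis unfolding lhs .
next
  case False
  hence "e\<^sup>2 \<le> \<bar>y\<bar>\<^sup>2" by simp
  hence ye: "\<bar>y\<bar> \<ge> e" by (rule power2_le_imp_le) simp
  hence yp: "\<bar>y\<bar> > 0" using assms by auto
  have "(y\<^sup>2) powr ((p - 2)/2) = \<bar>y\<bar> powr (p - 2)"
  proof -
    have "y\<^sup>2 = \<bar>y\<bar> powr 2" using yp by (simp add: powr_realpow)
    hence "(y\<^sup>2) powr ((p - 2)/2) = \<bar>y\<bar> powr (2 * ((p - 2)/2))" by (subst \<open>y\<^sup>2 = _\<close>) (rule powr_powr)
    moreover have "2 * ((p - 2)/2) = p - 2" by simp
    ultimately show ?thesis by metis
  qed
  hence "2 * y * psi' p e (y\<^sup>2) * y = p * (\<bar>y\<bar> powr (p-2) * \<bar>y\<bar>\<^sup>2)"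
    using False by (simp add: psi'_def power2_eq_square)
  also have "\<bar>y\<bar> powr (p-2) * \<bar>y\<bar>\<^sup>2 = \<bar>y\<bar> powr p" using yp
    by (simp add: powr_diff power2_eq_square)
  finally show ?thesis using assms by simp
qed

theorem lemma5p5:
  fixes \<Omega> :: "'a::euclidean_space set"
    and \<iota> :: "'v::{real_inner,complete_space} \<Rightarrow> 'a \<Rightarrow> real"
    and F :: "'v \<Rightarrow> real"
    and \<alpha> \<beta> p \<rho> :: real
    and ubar :: 'v and eps :: "nat \<Rightarrow> real" and u :: "nat \<Rightarrow> 'v"
    and lam :: "nat \<Rightarrow> ('v \<Rightarrow>\<^sub>L real)" and lbar :: "'v \<Rightarrow>\<^sub>L real"
  assumes dom: "lipschitz_domain \<Omega>" "bounded \<Omega>"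
    and emb: "compact_dense_embedding \<Omega> \<iota>"
    and F_wlsc: "weakly_lsc F"
    and F_below: "bounded_below_affine F"
    and F_C1: "continuously_frechet_differentiable F"
    and params: "\<alpha> > 0" "\<beta> > 0" "0 < p" "p < 1"
    and rho: "\<rho> > 0"
    and loc: "\<forall>w. norm (w - ubar) \<le> \<rho> \<longrightarrow> Phi \<Omega> \<iota> F \<alpha> \<beta> p 0 ubar \<le> Phi \<Omega> \<iota> F \<alpha> \<beta> p 0 w"
    and eps_pos: "\<forall>k. eps k > 0" and eps_lim: "eps \<longlonglongrightarrow> 0"
    and u_feas: "\<forall>k. norm (u k - ubar) \<le> \<rho>"
    and u_opt: "\<forall>k w. norm (w - ubar) \<le> \<rho> \<longrightarrow>
        Phi \<Omega> \<iota> F \<alpha> \<beta> p (eps k) (u k) + 1/2 * (L2norm \<Omega> (\<lambda>x. \<iota> (u k) x - \<iota> ubar x))\<^sup>2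
        \<le> Phi \<Omega> \<iota> F \<alpha> \<beta> p (eps k) w + 1/2 * (L2norm \<Omega> (\<lambda>x. \<iota> w x - \<iota> ubar x))\<^sup>2"
    and lam_def: "\<forall>k v. blinfun_apply (lam k) v =
        (LINT x:\<Omega>|lebesgue. 2 * \<iota> (u k) x * psi' p (eps k) ((\<iota> (u k) x)\<^sup>2) * \<iota> v x)"
    and u_conv: "u \<longlonglongrightarrow> ubar"
    and lam_conv: "lam \<longlonglongrightarrow> lbar"
  shows "(\<lambda>k. blinfun_apply (lam k) (u k)) \<longlonglongrightarrow> blinfun_apply lbar ubar
    \<and> blinfun_apply lbar ubar = p * (LINT x:\<Omega>|lebesgue. \<bar>\<iota> ubar x\<bar> powr p)"
proof -
  have opn: "open \<Omega>" using dom(1) unfolding lipschitz_domain_def by (rule conjunct1)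
  have \<Omega>lm: "\<Omega> \<in> lmeasurable" using lmeasurable_interior[OF dom(2)] interior_open[OF opn] by simp
  have \<Omega>s: "\<Omega> \<in> sets lebesgue" using \<Omega>lm by (simp add: fmeasurableD)
  have \<Omega>fin: "emeasure lebesgue \<Omega> < \<infinity>" using fmeasurableD2[OF \<Omega>lm] by (simp add: less_top)
  have ind_int: "integrable lebesgue (indicator \<Omega> :: 'a \<Rightarrow> real)"
    by (rule integrable_real_indicator[OF \<Omega>s \<Omega>fin])
  have "\<exists>C. \<forall>v. L2norm \<Omega> (\<iota> v) \<le> C * norm v"
    using emb by (simp add: compact_dense_embedding_def)
  then obtain C where C: "\<forall>v. L2norm \<Omega> (\<iota> v) \<le> C * norm v" by blast
  have L2: "\<forall>v. \<iota> v \<in> L2set \<Omega>" using emb by (simp add: compact_dense_embedding_def)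
  have addi: "\<forall>u w. AE x in lebesgue. x \<in> \<Omega> \<longrightarrow> \<iota> (u + w) x = \<iota> u x + \<iota> w x"
    using emb by (simp add: compact_dense_embedding_def)
  have smul: "\<forall>c u. AE x in lebesgue. x \<in> \<Omega> \<longrightarrow> \<iota> (c *\<^sub>R u) x = c * \<iota> u x"
    using emb by (simp add: compact_dense_embedding_def)
  define g where "g v x = indicator \<Omega> x * \<iota> v x" for v x
  have g_meas: "g v \<in> borel_measurable lebesgue" for v
    using L2 unfolding L2set_def set_borel_measurable_def g_def by auto
  have g_out: "x \<notin> \<Omega> \<Longrightarrow> g v x = 0" for v x by (simp add: g_def)
  have g_in: "x \<in> \<Omega> \<Longrightarrow> g v x = \<iota> v x" for v x by (simp add: g_def)
  have sq_eq: "(\<lambda>x. indicator \<Omega> x *\<^sub>R (\<iota> v x)\<^sup>2) = (\<lambda>x. (g v x)\<^sup>2)" for v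
    by (auto simp: g_def indicator_def fun_eq_iff)
  have g_sq_int: "integrable lebesgue (\<lambda>x. (g v x)\<^sup>2)" for v
  proof -
    have "set_integrable lebesgue \<Omega> (\<lambda>x. (\<iota> v x)\<^sup>2)" using L2 unfolding L2set_def by auto
    thus ?thesis unfolding set_integrable_def sq_eq .
  qed
  define h where "h k y = 2 * y * psi' p (eps k) (y\<^sup>2) * y" for k y
  have h_meas: "(\<lambda>x. h k (g v x)) \<in> borel_measurable lebesgue" for k v
    unfolding h_def psi'_def using g_meas[of v] by measurable
  have lam_eq: "blinfun_apply (lam k) (u k) = integral\<^sup>L lebesgue (\<lambda>x. h k (g (u k) x))" for k
  proof -
    have "(\<lambda>x. indicator \<Omega> x *\<^sub>R (2 * \<iota> (u k) x * psi' p (eps k) ((\<iota> (u k) x)\<^sup>2) * \<iota> (u k) x))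
        = (\<lambda>x. h k (g (u k) x))"
      by (auto simp: fun_eq_iff h_def g_def indicator_def)
    thus ?thesis using lam_def unfolding set_lebesgue_integral_def by simp
  qed
  define A where "A = integral\<^sup>L lebesgue (\<lambda>x. \<bar>g ubar x\<bar> powr p)"
  have rhs_eq: "(LINT x:\<Omega>|lebesgue. \<bar>\<iota> ubar x\<bar> powr p) = A"
  proof -
    have "(\<lambda>x. indicator \<Omega> x *\<^sub>R (\<bar>\<iota> ubar x\<bar> powr p)) = (\<lambda>x. \<bar>g ubar x\<bar> powr p)"
      by (auto simp: fun_eq_iff g_def indicator_def)
    thus ?thesis unfolding set_lebesgue_integral_def A_def by simp
  qed
  have pow_le: "\<bar>y\<bar> powr p \<le> 1 + y\<^sup>2" for y :: real
    using powr_split_bound[of "\<bar>y\<bar>" 1 p] params by simp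
  have pb_int: "integrable lebesgue (\<lambda>x. \<bar>g ubar x\<bar> powr p)"
  proof (rule Bochner_Integration.integrable_bound[where f="\<lambda>x. indicator \<Omega> x + (g ubar x)\<^sup>2"])
    show "integrable lebesgue (\<lambda>x. indicator \<Omega> x + (g ubar x)\<^sup>2)"
      using ind_int g_sq_int by auto
    show "(\<lambda>x. \<bar>g ubar x\<bar> powr p) \<in> borel_measurable lebesgue" using g_meas[of ubar] by measurable
    show "AE x in lebesgue. norm (\<bar>g ubar x\<bar> powr p) \<le> norm (indicator \<Omega> x + (g ubar x)\<^sup>2)"
    proof (rule AE_I2)
      fix x show "norm (\<bar>g ubar x\<bar> powr p) \<le> norm (indicator \<Omega> x + (g ubar x)\<^sup>2)"
      proof (cases "x \<in> \<Omega>")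
        case True then show ?thesis using pow_le[of "g ubar x"] by simp
      next
        case False then show ?thesis by (simp add: g_out)
      qed
    qed
  qed
  have sq_ineq: "(a - b)\<^sup>2 \<le> 2 * a\<^sup>2 + 2 * b\<^sup>2" for a b :: real
    using zero_le_power2[of "a + b"] power2_sum[of a b] power2_diff[of a b] by linarith
  have dsq_int: "integrable lebesgue (\<lambda>x. (g (u k) x - g ubar x)\<^sup>2)" for k
  proof (rule Bochner_Integration.integrable_bound[where f="\<lambda>x. 2 * (g (u k) x)\<^sup>2 + 2 * (g ubar x)\<^sup>2"])
    show "integrable lebesgue (\<lambda>x. 2 * (g (u k) x)\<^sup>2 + 2 * (g ubar x)\<^sup>2)"
      using g_sq_int by auto
    show "(\<lambda>x. (g (u k) x - g ubar x)\<^sup>2) \<in> borel_measurable lebesgue"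
      using g_meas[of "u k"] g_meas[of ubar] by measurable
    show "AE x in lebesgue. norm ((g (u k) x - g ubar x)\<^sup>2) \<le> norm (2 * (g (u k) x)\<^sup>2 + 2 * (g ubar x)\<^sup>2)"
      using sq_ineq by (intro AE_I2) simp
  qed
  have hk_int: "integrable lebesgue (\<lambda>x. h k (g (u k) x))" for k
  proof (rule Bochner_Integration.integrable_bound[where
        f="\<lambda>x. p * (indicator \<Omega> x + (g (u k) x)\<^sup>2) + p * eps k powr p * indicator \<Omega> x"])
    show "integrable lebesgue (\<lambda>x. p * (indicator \<Omega> x + (g (u k) x)\<^sup>2) + p * eps k powr p * indicator \<Omega> x)"
      using ind_int g_sq_int by auto
    show "(\<lambda>x. h k (g (u k) x)) \<in> borel_measurable lebesgue" by (rule h_meas)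
    show "AE x in lebesgue. norm (h k (g (u k) x)) \<le>
        norm (p * (indicator \<Omega> x + (g (u k) x)\<^sup>2) + p * eps k powr p * indicator \<Omega> x)"
    proof (rule AE_I2)
      fix x show "norm (h k (g (u k) x)) \<le>
        norm (p * (indicator \<Omega> x + (g (u k) x)\<^sup>2) + p * eps k powr p * indicator \<Omega> x)"
      proof (cases "x \<in> \<Omega>")
        case True
        let ?y = "g (u k) x"
        have 1: "\<bar>h k ?y - p * \<bar>?y\<bar> powr p\<bar> \<le> p * eps k powr p"
          unfolding h_def using psi'_bound[of "eps k" p ?y] eps_pos params by auto
        have 2: "p * \<bar>?y\<bar> powr p \<le> p * (1 + ?y\<^sup>2)"
          using pow_le[of ?y] params by (intro mult_left_mono) auto
        have 3: "0 \<le> p * eps k powr p" using params by simp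
        have 4: "0 \<le> p * (1 + ?y\<^sup>2)" using params by simp
        have 5: "0 \<le> p * \<bar>?y\<bar> powr p" using params by simp
        have "\<bar>h k ?y\<bar> \<le> p * (1 + ?y\<^sup>2) + p * eps k powr p" using 1 2 5 by linarith
        thus ?thesis using True 3 4 by simp
      next
        case False then show ?thesis by (simp add: g_out h_def)
      qed
    qed
  qed
  define \<mu> where "\<mu> = measure lebesgue \<Omega>"
  define m where "m k = C * norm (u k - ubar)" for k
  define \<delta> where "\<delta> k = m k + eps k" for k
  define I where "I k = integral\<^sup>L lebesgue (\<lambda>x. (g (u k) x - g ubar x)\<^sup>2)" for k
  have I_m: "0 \<le> m k \<and> I k \<le> (m k)\<^sup>2" for k
  proof -
    have eqv: "u k + (-1) *\<^sub>R ubar = u k - ubar" by simp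
    have a1: "AE x in lebesgue. x \<in> \<Omega> \<longrightarrow> \<iota> (u k - ubar) x = \<iota> (u k) x + \<iota> ((-1) *\<^sub>R ubar) x"
      using addi[rule_format, of "u k" "(-1) *\<^sub>R ubar"] unfolding eqv .
    have a2: "AE x in lebesgue. x \<in> \<Omega> \<longrightarrow> \<iota> ((-1) *\<^sub>R ubar) x = - \<iota> ubar x"
      using smul[rule_format, of "-1" ubar] by simp
    have ae: "AE x in lebesgue. (g (u k - ubar) x)\<^sup>2 = (g (u k) x - g ubar x)\<^sup>2"
      using a1 a2 by eventually_elim (simp add: g_def indicator_def)
    have m1: "(\<lambda>x. (g (u k - ubar) x)\<^sup>2) \<in> borel_measurable lebesgue"
      using g_meas[of "u k - ubar"] by measurable
    have m2: "(\<lambda>x. (g (u k) x - g ubar x)\<^sup>2) \<in> borel_measurable lebesgue"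
      using g_meas[of "u k"] g_meas[of ubar] by measurable
    have "L2norm \<Omega> (\<iota> (u k - ubar)) = sqrt (integral\<^sup>L lebesgue (\<lambda>x. (g (u k - ubar) x)\<^sup>2))"
      unfolding L2norm_def set_lebesgue_integral_def sq_eq ..
    also have "integral\<^sup>L lebesgue (\<lambda>x. (g (u k - ubar) x)\<^sup>2) = I k"
      unfolding I_def using m1 m2 ae by (rule integral_cong_AE)
    finally have sI: "sqrt (I k) \<le> m k" using C[rule_format, of "u k - ubar"] unfolding m_def by linarith
    have I0: "0 \<le> I k" unfolding I_def by simp
    have m0: "0 \<le> m k" using sI real_sqrt_ge_zero[OF I0] by linarith
    have "(sqrt (I k))\<^sup>2 \<le> (m k)\<^sup>2" using sI real_sqrt_ge_zero[OF I0] by (rule power_mono)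
    thus ?thesis using m0 I0 by simp
  qed
  have bound: "\<bar>blinfun_apply (lam k) (u k) - p * A\<bar>
      \<le> \<mu> * (p * eps k powr p + p * \<delta> k powr p) + p * \<delta> k powr p" for k
  proof -
    have ek: "eps k > 0" using eps_pos by simp
    have dpos: "\<delta> k > 0" using I_m[of k] ek unfolding \<delta>_def by simp
    define B where "B x = indicator \<Omega> x * (p * eps k powr p + p * \<delta> k powr p)
        + p * \<delta> k powr (p - 2) * (g (u k) x - g ubar x)\<^sup>2" for x
    have B_int: "integrable lebesgue B" unfolding B_def using ind_int dsq_int[of k] by auto
    have "\<bar>blinfun_apply (lam k) (u k) - p * A\<bar>
        = \<bar>integral\<^sup>L lebesgue (\<lambda>x. h k (g (u k) x) - p * \<bar>g ubar x\<bar> powr p)\<bar>"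
      unfolding lam_eq A_def using hk_int[of k] pb_int by simp
    also have "\<dots> \<le> integral\<^sup>L lebesgue B"
    proof (rule integral_abs_bound_integral)
      show "integrable lebesgue (\<lambda>x. h k (g (u k) x) - p * \<bar>g ubar x\<bar> powr p)"
        using hk_int[of k] pb_int by auto
      show "integrable lebesgue B" by (rule B_int)
      fix x
      show "\<bar>h k (g (u k) x) - p * \<bar>g ubar x\<bar> powr p\<bar> \<le> B x"
      proof (cases "x \<in> \<Omega>")
        case True
        let ?a = "g (u k) x" and ?b = "g ubar x"
        have 1: "\<bar>h k ?a - p * \<bar>?a\<bar> powr p\<bar> \<le> p * eps k powr p"
          unfolding h_def using psi'_bound[of "eps k" p ?a] ek params by auto
        have 2: "\<bar>\<bar>?a\<bar> powr p - \<bar>?b\<bar> powr p\<bar> \<le> \<bar>?a - ?b\<bar> powr p"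
          using diff_abs_powr params by simp
        have 3: "\<bar>?a - ?b\<bar> powr p \<le> \<delta> k powr p + \<delta> k powr (p - 2) * \<bar>?a - ?b\<bar>\<^sup>2"
          using powr_split_bound[of "\<bar>?a - ?b\<bar>" "\<delta> k" p] dpos params by simp
        have 4: "p * \<bar>\<bar>?a\<bar> powr p - \<bar>?b\<bar> powr p\<bar> \<le> p * (\<delta> k powr p + \<delta> k powr (p - 2) * (?a - ?b)\<^sup>2)"
          using 2 3 params by (intro mult_left_mono) auto
        have 5: "\<bar>p * \<bar>?a\<bar> powr p - p * \<bar>?b\<bar> powr p\<bar> = p * \<bar>\<bar>?a\<bar> powr p - \<bar>?b\<bar> powr p\<bar>"
          using params by (simp add: abs_mult right_diff_distrib[symmetric])
        have 6: "\<bar>h k ?a - p * \<bar>?b\<bar> powr p\<bar> \<le> \<bar>h k ?a - p * \<bar>?a\<bar> powr p\<bar> + \<bar>p * \<bar>?a\<bar> powr p - p * \<bar>?b\<bar> powr p\<bar>"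
          using abs_triangle_ineq[of "h k ?a - p * \<bar>?a\<bar> powr p" "p * \<bar>?a\<bar> powr p - p * \<bar>?b\<bar> powr p"] by simp
        have "\<bar>h k ?a - p * \<bar>?b\<bar> powr p\<bar> \<le> (p * eps k powr p + p * \<delta> k powr p) + p * \<delta> k powr (p - 2) * (?a - ?b)\<^sup>2"
          using 1 4 5 6 by (simp add: algebra_simps)
        thus ?thesis using True unfolding B_def by simp
      next
        case False
        have "0 \<le> p * \<delta> k powr (p - 2) * (g (u k) x - g ubar x)\<^sup>2" using params by simp
        then show ?thesis using False by (simp add: g_out h_def B_def)
      qed
    qed
    also have "integral\<^sup>L lebesgue B = \<mu> * (p * eps k powr p + p * \<delta> k powr p) + p * \<delta> k powr (p - 2) * I k"
      unfolding B_def I_def \<mu>_def using ind_int dsq_int[of k] by (simp add: mult.commute)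
    also have "\<dots> \<le> \<mu> * (p * eps k powr p + p * \<delta> k powr p) + p * \<delta> k powr p"
    proof -
      have "I k \<le> (\<delta> k)\<^sup>2" using I_m[of k] ek unfolding \<delta>_def
        by (smt (verit) power_mono)
      hence "\<delta> k powr (p - 2) * I k \<le> \<delta> k powr (p - 2) * (\<delta> k)\<^sup>2" by (intro mult_left_mono) auto
      also have "\<delta> k powr (p - 2) * (\<delta> k)\<^sup>2 = \<delta> k powr p" using dpos
        by (simp add: powr_diff power2_eq_square)
      finally have "p * (\<delta> k powr (p - 2) * I k) \<le> p * \<delta> k powr p" using params by simp
      thus ?thesis by (simp add: mult.assoc)
    qed
    finally show ?thesis .
  qed
  have m0: "m \<longlonglongrightarrow> 0"
  proof -
    have "(\<lambda>k. u k - ubar) \<longlonglongrightarrow> 0" using u_conv by (simp add: LIM_zero)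
    hence "(\<lambda>k. norm (u k - ubar)) \<longlonglongrightarrow> 0" by (rule tendsto_norm_zero)
    hence "(\<lambda>k. C * norm (u k - ubar)) \<longlonglongrightarrow> C * 0" by (intro tendsto_intros)
    thus ?thesis unfolding m_def by simp
  qed
  have d0: "\<delta> \<longlonglongrightarrow> 0" using tendsto_add[OF m0 eps_lim] unfolding \<delta>_def by simp
  have e1: "(\<lambda>k. eps k powr p) \<longlonglongrightarrow> 0"
    by (rule tendsto_zero_powrI[OF eps_lim tendsto_const]) (use eps_pos params in \<open>auto intro!: always_eventually less_imp_le\<close>)
  have d1: "(\<lambda>k. \<delta> k powr p) \<longlonglongrightarrow> 0"
  proof (rule tendsto_zero_powrI[OF d0 tendsto_const])
    show "\<forall>\<^sub>F k in sequentially. 0 \<le> \<delta> k"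
      using I_m eps_pos unfolding \<delta>_def by (intro always_eventually allI) (smt (verit))
  qed (use params in auto)
  have "(\<lambda>k. \<mu> * (p * eps k powr p + p * \<delta> k powr p) + p * \<delta> k powr p) \<longlonglongrightarrow> \<mu> * (p * 0 + p * 0) + p * 0"
    by (intro tendsto_intros e1 d1)
  hence R0: "(\<lambda>k. \<mu> * (p * eps k powr p + p * \<delta> k powr p) + p * \<delta> k powr p) \<longlonglongrightarrow> 0" by simp
  have "(\<lambda>k. blinfun_apply (lam k) (u k) - p * A) \<longlonglongrightarrow> 0"
    by (rule Lim_null_comparison[OF _ R0]) (use bound in \<open>intro always_eventually allI, simp\<close>)
  hence L1: "(\<lambda>k. blinfun_apply (lam k) (u k)) \<longlonglongrightarrow> p * A" by (simp add: LIM_zero_iff)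
  have L2': "(\<lambda>k. blinfun_apply (lam k) (u k)) \<longlonglongrightarrow> blinfun_apply lbar ubar"
    by (rule bounded_bilinear.tendsto[OF bounded_bilinear_blinfun_apply lam_conv u_conv])
  have "blinfun_apply lbar ubar = p * A" using LIMSEQ_unique[OF L2' L1] .
  thus ?thesis using L2' rhs_eq by simp
qed

end
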